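(* Let $L$ be an $n\times n$ nonsingular M-matrix with integer entries and nonnegative row sums. Then every equivalence class of $\mathbb{Z}^n$ under $\sim$ contains a unique energy minimizer, a unique $z$-superstable configuration and a unique $\chi$-superstable configuration, and these three configurations coincide.
   Context: A Z-matrix is a square real matrix whose off-diagonal entries are all $\le 0$. A nonsingular M-matrix is a Z-matrix $L$ that is invertible with $L^{-1}$ having all entries nonnegative. Vector inequalities are entrywise. For $f,g\in\mathbb{Z}^n$, $f\sim g$ means $g-f=Lz$ for some $z\in\mathbb{Z}^n$. For $q\in\mathbb{Z}^n$, $E(q)=\|L^{-1}q\|_2^2$; an energy minimizer in the class of $f$ is a $g\in\mathbb{Z}^n$, $g\ge0$, $g\sim f$, minimizing $E$ among all such vectors. A vector $f\in\mathbb{Z}^n$ with $f\ge0$ is $\chi$-superstable if for every $\chi\in\{0,1\}^n$, $\chi\ne0$, there is $i$ with $f_i-(L\chi)_i<0$; it is $z$-superstable if for every $z\in\mathbb{Z}^n$, $z\ge0$, $z\ne0$, there is $i$ with $f_i-(Lz)_i<0$. *)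

theory Defs
  imports "HOL-Analysis.Analysis"
begin

definition real_mat :: "int^'n^'m \<Rightarrow> real^'n^'m" where
  "real_mat L = (\<chi> i j. real_of_int (L $ i $ j))"

definition real_vec :: "int^'n \<Rightarrow> real^'n" where
  "real_vec q = (\<chi> i. real_of_int (q $ i))"

definition Z_matrix :: "int^'n^'n \<Rightarrow> bool" where
  "Z_matrix L \<longleftrightarrow> (\<forall>i j. i \<noteq> j \<longrightarrow> L $ i $ j \<le> 0)"

definition nonsingular_M_matrix :: "int^'n^'n \<Rightarrow> bool" where
  "nonsingular_M_matrix L \<longleftrightarrow> Z_matrix L \<and> invertible (real_mat L)
     \<and> (\<forall>i j. matrix_inv (real_mat L) $ i $ j \<ge> 0)"

definition nonneg_row_sums :: "int^'n^'n \<Rightarrow> bool" where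
  "nonneg_row_sums L \<longleftrightarrow> (\<forall>i. (\<Sum>j\<in>UNIV. L $ i $ j) \<ge> 0)"

definition nonneg_vec :: "int^'n \<Rightarrow> bool" where
  "nonneg_vec f \<longleftrightarrow> (\<forall>i. f $ i \<ge> 0)"

definition lequiv :: "int^'n^'n \<Rightarrow> int^'n \<Rightarrow> int^'n \<Rightarrow> bool" where
  "lequiv L f g \<longleftrightarrow> (\<exists>z::int^'n. g - f = L *v z)"

definition energy :: "int^'n^'n \<Rightarrow> int^'n \<Rightarrow> real" where
  "energy L q = (norm (matrix_inv (real_mat L) *v real_vec q))\<^sup>2"

definition energy_minimizer :: "int^'n^'n \<Rightarrow> int^'n \<Rightarrow> int^'n \<Rightarrow> bool" where
  "energy_minimizer L f g \<longleftrightarrow> nonneg_vec g \<and> lequiv L f g \<and>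
     (\<forall>h. nonneg_vec h \<and> lequiv L f h \<longrightarrow> energy L g \<le> energy L h)"

definition chi_superstable :: "int^'n^'n \<Rightarrow> int^'n \<Rightarrow> bool" where
  "chi_superstable L f \<longleftrightarrow> nonneg_vec f \<and>
     (\<forall>c::int^'n. (\<forall>i. c $ i \<in> {0,1}) \<and> c \<noteq> 0 \<longrightarrow> (\<exists>i. f $ i - (L *v c) $ i < 0))"

definition z_superstable :: "int^'n^'n \<Rightarrow> int^'n \<Rightarrow> bool" where
  "z_superstable L f \<longleftrightarrow> nonneg_vec f \<and>
     (\<forall>z::int^'n. nonneg_vec z \<and> z \<noteq> 0 \<longrightarrow> (\<exists>i. f $ i - (L *v z) $ i < 0))"

end

theory Submission
  imports Defs
begin

lemma minv:
  fixes A :: "real^'n^'n"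
  assumes "invertible A"
  shows "A ** matrix_inv A = mat 1" "matrix_inv A ** A = mat 1"
  using someI_ex[OF assms[unfolded invertible_def]] unfolding matrix_inv_def by auto

lemma real_vec_mult: "real_vec (L *v z) = real_mat L *v real_vec z"
  by (simp add: real_vec_def real_mat_def matrix_vector_mult_def vec_eq_iff)

lemma real_vec_diff: "real_vec (a - b) = real_vec a - real_vec b"
  by (simp add: real_vec_def vec_eq_iff)

lemma real_vec_add: "real_vec (a + b) = real_vec a + real_vec b"
  by (simp add: real_vec_def vec_eq_iff)

lemma zrow_nonpos:
  fixes L :: "int^'n^'n"
  assumes "Z_matrix L" "nonneg_vec q" "q $ i = 0"
  shows "(L *v q) $ i \<le> 0"
proof -
  have "(L *v q) $ i = (\<Sum>j\<in>UNIV. L $ i $ j * q $ j)"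
    by (simp add: matrix_vector_mult_def)
  also have "\<dots> \<le> 0"
  proof (rule sum_nonpos)
    fix j
    show "L $ i $ j * q $ j \<le> 0"
    proof (cases "j = i")
      case True then show ?thesis using assms(3) by simp
    next
      case False
      then have "L $ i $ j \<le> 0" using assms(1) unfolding Z_matrix_def by auto
      moreover have "q $ j \<ge> 0" using assms(2) unfolding nonneg_vec_def by auto
      ultimately show ?thesis by (simp add: mult_nonpos_nonneg)
    qed
  qed
  finally show ?thesis .
qed

lemma half_unique:
  fixes L :: "int^'n^'n"
  assumes Z: "Z_matrix L" and sg: "z_superstable L g" and h: "nonneg_vec h"
    and eq: "h = g + L *v w"
  shows "nonneg_vec w"
proof -
  define q where "q = (\<chi> i. max 0 (w $ i))"
  define p where "p = (\<chi> i. max 0 (- w $ i))"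
  have pq: "p = q - w" unfolding p_def q_def by (auto simp: vec_eq_iff max_def)
  have pn: "nonneg_vec p" "nonneg_vec q" unfolding p_def q_def nonneg_vec_def by auto
  have "\<forall>i. (g - L *v p) $ i \<ge> 0"
  proof
    fix i
    show "(g - L *v p) $ i \<ge> 0"
    proof (cases "w $ i \<ge> 0")
      case True
      then have "p $ i = 0" unfolding p_def by simp
      then have "(L *v p) $ i \<le> 0" using zrow_nonpos[OF Z pn(1)] by blast
      moreover have "g $ i \<ge> 0" using sg unfolding z_superstable_def nonneg_vec_def by auto
      ultimately show ?thesis by simp
    next
      case False
      then have "q $ i = 0" unfolding q_def by simp
      then have "(L *v q) $ i \<le> 0" using zrow_nonpos[OF Z pn(2)] by blast
      moreover have "h $ i \<ge> 0" using h unfolding nonneg_vec_def by auto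
      moreover have "L *v q = L *v p + L *v w" using pq
        by (simp add: matrix_vector_right_distrib[symmetric])
      then have "g - L *v p = h - L *v q" using eq by simp
      ultimately show ?thesis by simp
    qed
  qed
  note A = this
  have "p = 0"
  proof (rule ccontr)
    assume "p \<noteq> 0"
    then obtain i where "g $ i - (L *v p) $ i < 0" using sg pn(1) unfolding z_superstable_def by blast
    with A show False by (metis not_le vector_minus_component)
  qed
  then show ?thesis unfolding nonneg_vec_def p_def by (auto simp: vec_eq_iff max_def split: if_splits; metis linear)
qed

lemma z_unique:
  fixes L :: "int^'n^'n"
  assumes Z: "Z_matrix L" and "z_superstable L g" "z_superstable L h"
    and "lequiv L f g" "lequiv L f h"
  shows "h = g"
proof -
  obtain zg zh where zg: "g - f = L *v zg" and zh: "h - f = L *v zh"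
    using assms(4,5) unfolding lequiv_def by auto
  have e1: "h = g + L *v (zh - zg)" using zg zh
    by (simp add: matrix_vector_mult_diff_distrib algebra_simps)
  have e2: "g = h + L *v (zg - zh)" using zg zh
    by (simp add: matrix_vector_mult_diff_distrib algebra_simps)
  have "nonneg_vec (zh - zg)"
    using half_unique[OF Z assms(2) _ e1] assms(3) unfolding z_superstable_def by auto
  moreover have "nonneg_vec (zg - zh)"
    using half_unique[OF Z assms(3) _ e2] assms(2) unfolding z_superstable_def by auto
  ultimately have "zh = zg" unfolding nonneg_vec_def by (auto simp: vec_eq_iff intro: antisym)
  then show ?thesis using e1 by simp
qed

lemma chi_imp_z:
  fixes L :: "int^'n^'n"
  assumes Z: "Z_matrix L" and R: "nonneg_row_sums L" and c: "chi_superstable L g"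
  shows "z_superstable L g"
  unfolding z_superstable_def
proof (intro conjI allI impI)
  show "nonneg_vec g" using c unfolding chi_superstable_def by auto
  fix z :: "int^'n"
  assume zz: "nonneg_vec z \<and> z \<noteq> 0"
  show "\<exists>i. g $ i - (L *v z) $ i < 0"
  proof (rule ccontr)
    assume "\<not> ?thesis"
    then have gz: "\<forall>i. (L *v z) $ i \<le> g $ i" by (simp add: not_less)
    define M where "M = Max (range (\<lambda>i. z $ i))"
    have fin: "finite (range (\<lambda>i. z $ i))" by simp
    have zle: "\<And>i. z $ i \<le> M" unfolding M_def using fin by (intro Max_ge) auto
    have "M \<in> range (\<lambda>i. z $ i)" unfolding M_def by (rule Max_in[OF fin]) simp
    then obtain k where k: "z $ k = M" by auto
    obtain k' where "z $ k' \<noteq> 0" using zz by (auto simp: vec_eq_iff)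
    then have "z $ k' > 0" using zz unfolding nonneg_vec_def by (metis order.not_eq_order_implies_strict)
    then have M1: "M \<ge> 1" using zle[of k'] by simp
    define cv where "cv = (\<chi> i. if z $ i = M then 1 else (0::int))"
    have c01: "\<forall>i. cv $ i \<in> {0,1}" unfolding cv_def by auto
    have cnz: "cv \<noteq> 0" using k unfolding cv_def by (auto simp: vec_eq_iff)
    have "\<forall>i. (L *v cv) $ i \<le> g $ i"
    proof
      fix i
      show "(L *v cv) $ i \<le> g $ i"
      proof (cases "z $ i = M")
        case False
        then have "cv $ i = 0" unfolding cv_def by simp
        moreover have "nonneg_vec cv" unfolding cv_def nonneg_vec_def by auto
        ultimately have "(L *v cv) $ i \<le> 0" using zrow_nonpos[OF Z] by blast
        moreover have "g $ i \<ge> 0" using c unfolding chi_superstable_def nonneg_vec_def by auto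
        ultimately show ?thesis by simp
      next
        case True
        have "(\<Sum>j\<in>UNIV. L $ i $ j * (M - 1) + (if z $ j = M then L $ i $ j else 0))
              \<le> (\<Sum>j\<in>UNIV. L $ i $ j * z $ j)"
        proof (rule sum_mono)
          fix j
          show "L $ i $ j * (M - 1) + (if z $ j = M then L $ i $ j else 0) \<le> L $ i $ j * z $ j"
          proof (cases "z $ j = M")
            case True then show ?thesis by (simp add: algebra_simps)
          next
            case False
            then have "j \<noteq> i" using \<open>z $ i = M\<close> by auto
            then have "L $ i $ j \<le> 0" using Z unfolding Z_matrix_def by auto
            moreover have "z $ j \<le> M - 1" using zle[of j] False by simp
            ultimately show ?thesis using False by (simp add: mult_left_mono_neg)
          qed
        qed
        moreover have "(\<Sum>j\<in>UNIV. L $ i $ j * (M - 1) + (if z $ j = M then L $ i $ j else 0))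
            = (M - 1) * (\<Sum>j\<in>UNIV. L $ i $ j) + (L *v cv) $ i"
          apply (subst sum.distrib)
          apply (simp add: sum_distrib_left matrix_vector_mult_def cv_def mult.commute)
          apply (rule sum.cong; simp)
          done
        moreover have "(M - 1) * (\<Sum>j\<in>UNIV. L $ i $ j) \<ge> 0"
          using R M1 unfolding nonneg_row_sums_def by simp
        ultimately have "(L *v cv) $ i \<le> (L *v z) $ i" by (simp add: matrix_vector_mult_def)
        then show ?thesis using gz by (meson order_trans)
      qed
    qed
    then show False using c c01 cnz unfolding chi_superstable_def by (metis diff_ge_0_iff_ge not_le)
  qed
qed

lemma inv_nonneg_mult:
  fixes A :: "real^'n^'n"
  assumes "\<forall>i j. A $ i $ j \<ge> 0" "\<forall>i. v $ i \<ge> 0"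
  shows "(A *v v) $ i \<ge> 0"
  using assms by (simp add: matrix_vector_mult_def sum_nonneg)

lemma min_imp_z:
  fixes L :: "int^'n^'n"
  assumes M: "nonsingular_M_matrix L" and em: "energy_minimizer L f g"
  shows "z_superstable L g"
  unfolding z_superstable_def
proof (intro conjI allI impI)
  show ng: "nonneg_vec g" using em unfolding energy_minimizer_def by auto
  fix z :: "int^'n"
  assume zz: "nonneg_vec z \<and> z \<noteq> 0"
  show "\<exists>i. g $ i - (L *v z) $ i < 0"
  proof (rule ccontr)
    assume "\<not> ?thesis"
    then have hn: "nonneg_vec (g - L *v z)" unfolding nonneg_vec_def by (simp add: not_less)
    obtain zg where zg: "g - f = L *v zg" using em unfolding energy_minimizer_def lequiv_def by auto
    have "g - L *v z - f = L *v (zg - z)" using zg by (simp add: matrix_vector_mult_diff_distrib)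
    then have "lequiv L f (g - L *v z)" unfolding lequiv_def by blast
    with hn em have le: "energy L g \<le> energy L (g - L *v z)" unfolding energy_minimizer_def by blast
    define A where "A = matrix_inv (real_mat L)"
    have inv: "invertible (real_mat L)" and Anon: "\<forall>i j. A $ i $ j \<ge> 0"
      using M unfolding nonsingular_M_matrix_def A_def by auto
    define zr where "zr = real_vec z"
    define u where "u = A *v real_vec (g - L *v z)"
    have "A *v real_vec (g - L *v z) = A *v real_vec g - zr"
      unfolding real_vec_diff real_vec_mult matrix_vector_mult_diff_distrib matrix_vector_mul_assoc
        A_def minv(2)[OF inv] zr_def by simp
    then have ug: "A *v real_vec g = u + zr" unfolding u_def by simp
    have u0: "\<forall>i. u $ i \<ge> 0" unfolding u_def
      using inv_nonneg_mult[OF Anon] hn unfolding nonneg_vec_def real_vec_def by simp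
    have z0: "\<forall>i. zr $ i \<ge> 0" using zz unfolding zr_def real_vec_def nonneg_vec_def by simp
    have uz: "inner u zr \<ge> 0" unfolding inner_vec_def using u0 z0 by (simp add: sum_nonneg)
    have "zr \<noteq> 0" using zz unfolding zr_def real_vec_def by (auto simp: vec_eq_iff)
    then have zp: "inner zr zr > 0" by simp
    have "energy L g = inner u u + 2 * inner u zr + inner zr zr"
      unfolding energy_def A_def[symmetric] ug power2_norm_eq_inner
      by (simp add: inner_add_left inner_add_right inner_commute)
    moreover have "energy L (g - L *v z) = inner u u"
      unfolding energy_def A_def[symmetric] u_def[symmetric] power2_norm_eq_inner by simp
    ultimately show False using le uz zp by linarith
  qed
qed

lemma exists_nonneg:
  fixes L :: "int^'n^'n"
  assumes inv: "invertible (real_mat L)"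
  shows "\<exists>h. nonneg_vec h \<and> lequiv L f h"
proof -
  define Lr where "Lr = real_mat L"
  define A where "A = matrix_inv Lr"
  define one :: "real^'n" where "one = (\<chi> i. 1)"
  define u where "u = A *v one"
  have Lu: "Lr *v u = one" unfolding u_def A_def Lr_def matrix_vector_mul_assoc minv(1)[OF inv] by simp
  define B where "B = (\<Sum>i\<in>UNIV. \<Sum>j\<in>UNIV. \<bar>Lr $ i $ j\<bar>)"
  define F where "F = (\<Sum>i\<in>UNIV. \<bar>real_of_int (f $ i)\<bar>)"
  define c where "c = B + F"
  define z :: "int^'n" where "z = (\<chi> i. \<lceil>c * u $ i\<rceil>)"
  define e where "e = real_vec z - c *\<^sub>R u"
  have e01: "\<And>j. 0 \<le> e $ j \<and> e $ j \<le> 1"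
    unfolding e_def z_def real_vec_def by (simp; linarith)
  have rz: "real_vec z = c *\<^sub>R u + e" unfolding e_def by simp
  have "real_vec (f + L *v z) = real_vec f + c *\<^sub>R one + Lr *v e"
    unfolding real_vec_add real_vec_mult Lr_def[symmetric] rz matrix_vector_right_distrib
      matrix_vector_mult_scaleR Lu by simp
  note eqv = this
  have ineq: "\<forall>i. real_vec f $ i + c + (Lr *v e) $ i \<ge> 0"
  proof
    fix i
    have "(Lr *v e) $ i = (\<Sum>j\<in>UNIV. Lr $ i $ j * e $ j)" by (simp add: matrix_vector_mult_def)
    also have "\<dots> \<ge> (\<Sum>j\<in>UNIV. - \<bar>Lr $ i $ j\<bar>)"
    proof (rule sum_mono)
      fix j
      have "\<bar>Lr $ i $ j * e $ j\<bar> \<le> \<bar>Lr $ i $ j\<bar>"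
        using e01[of j] by (simp add: abs_mult mult_left_le)
      then show "- \<bar>Lr $ i $ j\<bar> \<le> Lr $ i $ j * e $ j" by linarith
    qed
    finally have a: "(Lr *v e) $ i \<ge> - (\<Sum>j\<in>UNIV. \<bar>Lr $ i $ j\<bar>)" by (simp add: sum_negf)
    have b: "(\<Sum>j\<in>UNIV. \<bar>Lr $ i $ j\<bar>) \<le> B" unfolding B_def
      by (rule member_le_sum) (auto intro: sum_nonneg)
    have d: "\<bar>real_of_int (f $ i)\<bar> \<le> F" unfolding F_def
      by (rule member_le_sum) auto
    show "real_vec f $ i + c + (Lr *v e) $ i \<ge> 0"
      using a b d unfolding c_def real_vec_def by simp
  qed
  have "\<forall>i. real_of_int ((f + L *v z) $ i) \<ge> 0"
  proof
    fix i
    have "real_of_int ((f + L *v z) $ i) = real_vec (f + L *v z) $ i" by (simp add: real_vec_def)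
    also have "\<dots> = real_vec f $ i + c + (Lr *v e) $ i" unfolding eqv by (simp add: one_def)
    finally show "real_of_int ((f + L *v z) $ i) \<ge> 0" using ineq by simp
  qed
  then have "nonneg_vec (f + L *v z)" unfolding nonneg_vec_def by (metis of_int_0_le_iff)
  moreover have "lequiv L f (f + L *v z)" unfolding lequiv_def by auto
  ultimately show ?thesis by blast
qed

lemma finite_box: "finite {z :: int^'n. \<forall>i. \<bar>z $ i\<bar> \<le> N}"
proof -
  have "{z :: int^'n. \<forall>i. \<bar>z $ i\<bar> \<le> N} \<subseteq> (\<lambda>g. \<chi> i. g i) ` (PiE UNIV (\<lambda>_. {-N..N}))"
  proof
    fix z :: "int^'n"
    assume "z \<in> {z. \<forall>i. \<bar>z $ i\<bar> \<le> N}"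
    then have "(\<lambda>i. z $ i) \<in> PiE UNIV (\<lambda>_. {-N..N})" by (auto simp: PiE_def abs_le_iff minus_le_iff)
    moreover have "z = (\<chi> i. (\<lambda>i. z $ i) i)" by simp
    ultimately show "z \<in> (\<lambda>g. \<chi> i. g i) ` (PiE UNIV (\<lambda>_. {-N..N}))" by blast
  qed
  moreover have "finite ((\<lambda>g. \<chi> i. g i) ` (PiE UNIV (\<lambda>_. {-N..N})) :: (int^'n) set)"
    by (intro finite_imageI finite_PiE) auto
  ultimately show ?thesis by (rule finite_subset)
qed

lemma exists_min:
  fixes L :: "int^'n^'n"
  assumes inv: "invertible (real_mat L)"
  shows "\<exists>g. energy_minimizer L f g"
proof -
  obtain h0 where h0: "nonneg_vec h0" "lequiv L f h0" using exists_nonneg[OF inv] by blast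
  define A where "A = matrix_inv (real_mat L)"
  define E0 where "E0 = energy L h0"
  define T where "T = {h. nonneg_vec h \<and> lequiv L f h \<and> energy L h \<le> E0}"
  define R where "R = sqrt E0 + norm (A *v real_vec f)"
  define N where "N = \<lceil>R\<rceil>"
  have "T \<subseteq> (\<lambda>z. f + L *v z) ` {z :: int^'n. \<forall>i. \<bar>z $ i\<bar> \<le> N}"
  proof
    fix h assume hT: "h \<in> T"
    then obtain z where z: "h - f = L *v z" unfolding T_def lequiv_def by auto
    have hz: "h = f + L *v z" using z by (simp add: diff_eq_eq add.commute)
    have "A *v real_vec h = A *v real_vec f + real_vec z"
    proof -
      have "real_vec h = real_vec f + real_mat L *v real_vec z"
        unfolding hz real_vec_add real_vec_mult ..
      then show ?thesis unfolding A_def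
        by (simp add: matrix_vector_right_distrib matrix_vector_mul_assoc minv(2)[OF inv])
    qed
    then have rz: "real_vec z = A *v real_vec h - A *v real_vec f" by simp
    have "norm (A *v real_vec h) \<le> sqrt E0"
      using hT unfolding T_def energy_def A_def by (simp add: real_le_rsqrt)
    moreover have "norm (real_vec z) \<le> norm (A *v real_vec h) + norm (A *v real_vec f)"
      unfolding rz by (rule norm_triangle_ineq4)
    ultimately have nz: "norm (real_vec z) \<le> R" unfolding R_def by linarith
    have "\<forall>i. \<bar>z $ i\<bar> \<le> N"
    proof
      fix i
      have "\<bar>real_vec z $ i\<bar> \<le> R" using component_le_norm_cart[of "real_vec z" i] nz by linarith
      then have "real_of_int \<bar>z $ i\<bar> \<le> R" by (simp add: real_vec_def)
      then show "\<bar>z $ i\<bar> \<le> N" unfolding N_def by linarith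
    qed
    then show "h \<in> (\<lambda>z. f + L *v z) ` {z :: int^'n. \<forall>i. \<bar>z $ i\<bar> \<le> N}" using hz by blast
  qed
  then have finT: "finite T" by (rule finite_subset[OF _ finite_imageI[OF finite_box]])
  have h0T: "h0 \<in> T" unfolding T_def E0_def using h0 by simp
  define m where "m = Min (energy L ` T)"
  have "m \<in> energy L ` T" unfolding m_def using finT h0T by (intro Min_in) auto
  then obtain g where gT: "g \<in> T" and gm: "energy L g = m" by auto
  have "energy_minimizer L f g"
    unfolding energy_minimizer_def
  proof (intro conjI allI impI)
    show "nonneg_vec g" "lequiv L f g" using gT unfolding T_def by auto
    fix h assume hh: "nonneg_vec h \<and> lequiv L f h"
    show "energy L g \<le> energy L h"
    proof (cases "energy L h \<le> E0")
      case True
      then have "h \<in> T" using hh unfolding T_def by auto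
      then show ?thesis unfolding gm m_def using finT by (intro Min_le) auto
    next
      case False
      then show ?thesis using gT unfolding T_def by auto
    qed
  qed
  then show ?thesis by blast
qed

theorem mainTheorem7:
  fixes L :: "int^'n^'n"
  assumes "nonsingular_M_matrix L"
    and "nonneg_row_sums L"
  shows "\<forall>f::int^'n. \<exists>g.
           energy_minimizer L f g \<and> z_superstable L g \<and> chi_superstable L g \<and>
           (\<forall>h. energy_minimizer L f h \<longrightarrow> h = g) \<and>
           (\<forall>h. lequiv L f h \<and> z_superstable L h \<longrightarrow> h = g) \<and>
           (\<forall>h. lequiv L f h \<and> chi_superstable L h \<longrightarrow> h = g)"
proof
  fix f :: "int^'n"
  have Z: "Z_matrix L" and inv: "invertible (real_mat L)"
    using assms(1) unfolding nonsingular_M_matrix_def by auto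
  obtain g where em: "energy_minimizer L f g" using exists_min[OF inv] by blast
  have zs: "z_superstable L g" using min_imp_z[OF assms(1) em] .
  have cs: "chi_superstable L g"
    unfolding chi_superstable_def
  proof (intro conjI allI impI)
    show "nonneg_vec g" using zs unfolding z_superstable_def by auto
    fix c :: "int^'n" assume c: "(\<forall>i. c $ i \<in> {0, 1}) \<and> c \<noteq> 0"
    have "nonneg_vec c" unfolding nonneg_vec_def
    proof
      fix i have "c $ i \<in> {0, 1}" using c by blast
      then show "c $ i \<ge> 0" by auto
    qed
    with c zs show "\<exists>i. g $ i - (L *v c) $ i < 0" unfolding z_superstable_def by blast
  qed
  have lg: "lequiv L f g" using em unfolding energy_minimizer_def by auto
  show "\<exists>g.
           energy_minimizer L f g \<and> z_superstable L g \<and> chi_superstable L g \<and>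
           (\<forall>h. energy_minimizer L f h \<longrightarrow> h = g) \<and>
           (\<forall>h. lequiv L f h \<and> z_superstable L h \<longrightarrow> h = g) \<and>
           (\<forall>h. lequiv L f h \<and> chi_superstable L h \<longrightarrow> h = g)"
  proof (intro exI conjI allI impI)
    show "energy_minimizer L f g" "z_superstable L g" "chi_superstable L g" by fact+
  next
    fix h assume "energy_minimizer L f h"
    then show "h = g" using z_unique[OF Z zs min_imp_z[OF assms(1)] lg] unfolding energy_minimizer_def
      by blast
  next
    fix h assume "lequiv L f h \<and> z_superstable L h"
    then show "h = g" using z_unique[OF Z zs _ lg] by blast
  next
    fix h assume "lequiv L f h \<and> chi_superstable L h"
    then show "h = g" using z_unique[OF Z zs chi_imp_z[OF Z assms(2)] lg] by blast
  qed
qed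

end
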